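(* Let $a\neq 0$ be a constant and let $\phi(x,t)$ be a smooth function with $\phi_x\neq0$ satisfying the Schwarz–KdV equation $\frac{\phi_t}{\phi_x}+a\{\phi;x\}=0$. Then $u=a\{\phi;x\}$ solves the KdV equation $u_t+au_{xxx}+3uu_x=0$, and for any constants $A,B$ not both zero, on a region where $A\phi+B\neq0$, the function $$\widetilde u=a\{\phi;x\}+4a\Big(\log\frac{A\phi+B}{\sqrt{\phi_x}}\Big)_{xx}$$ also solves the KdV equation $\widetilde u_t+a\widetilde u_{xxx}+3\widetilde u\widetilde u_x=0$.
   Context: The Schwarzian derivative of a function $\phi(x,t)$ with $\phi_x\neq0$ is $\{\phi;x\}=\frac{\phi_{xxx}}{\phi_x}-\frac32\frac{\phi_{xx}^2}{\phi_x^2}$. All functions are smooth. *)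

theory Defs
  imports "HOL-Analysis.Analysis"
begin

definition px :: "(real \<Rightarrow> real \<Rightarrow> real) \<Rightarrow> real \<Rightarrow> real \<Rightarrow> real" where
  "px f = (\<lambda>x t. deriv (\<lambda>y. f y t) x)"

definition pt :: "(real \<Rightarrow> real \<Rightarrow> real) \<Rightarrow> real \<Rightarrow> real \<Rightarrow> real" where
  "pt f = (\<lambda>x t. deriv (\<lambda>s. f x s) t)"

fun dpart :: "bool list \<Rightarrow> (real \<Rightarrow> real \<Rightarrow> real) \<Rightarrow> real \<Rightarrow> real \<Rightarrow> real" where
  "dpart [] f = f"
| "dpart (b # bs) f = (if b then px else pt) (dpart bs f)"

definition smooth_on2 :: "(real \<times> real) set \<Rightarrow> (real \<Rightarrow> real \<Rightarrow> real) \<Rightarrow> bool" where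
  "smooth_on2 S f \<longleftrightarrow> (\<forall>ws. (\<lambda>(x, t). dpart ws f x t) differentiable_on S)"

definition schwarzian :: "(real \<Rightarrow> real \<Rightarrow> real) \<Rightarrow> real \<Rightarrow> real \<Rightarrow> real" where
  "schwarzian phi x t =
     px (px (px phi)) x t / px phi x t - 3 / 2 * (px (px phi) x t / px phi x t)\<^sup>2"

definition KdV_at :: "real \<Rightarrow> (real \<Rightarrow> real \<Rightarrow> real) \<Rightarrow> real \<Rightarrow> real \<Rightarrow> bool" where
  "KdV_at a u x t \<longleftrightarrow> pt u x t + a * px (px (px u)) x t + 3 * u x t * px u x t = 0"

end

theory Submission
  imports Defs
begin


lemma partial_x:
  fixes f :: "real \<Rightarrow> real \<Rightarrow> real"
  assumes "(\<lambda>(x, t). f x t) differentiable (at (x, t))"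
  shows "((\<lambda>y. f y t) has_real_derivative px f x t) (at x)"
proof -
  have "((\<lambda>y. (y, t)) has_derivative (\<lambda>h. (h, 0))) (at x)"
    by (auto intro!: derivative_eq_intros)
  hence "(\<lambda>y. (y, t)) differentiable (at x)" by (auto simp: differentiable_def)
  hence "((\<lambda>(x, t). f x t) \<circ> (\<lambda>y. (y, t))) differentiable (at x)"
    using assms by (intro differentiable_chain_at) auto
  hence "(\<lambda>y. f y t) differentiable (at x)" by (simp add: o_def)
  thus ?thesis unfolding px_def using DERIV_deriv_iff_real_differentiable by blast
qed

lemma partial_t:
  fixes f :: "real \<Rightarrow> real \<Rightarrow> real"
  assumes "(\<lambda>(x, t). f x t) differentiable (at (x, t))"
  shows "((\<lambda>s. f x s) has_real_derivative pt f x t) (at t)"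
proof -
  have "((\<lambda>s. (x, s)) has_derivative (\<lambda>h. (0, h))) (at t)"
    by (auto intro!: derivative_eq_intros)
  hence "(\<lambda>s. (x, s)) differentiable (at t)" by (auto simp: differentiable_def)
  hence "((\<lambda>(x, t). f x t) \<circ> (\<lambda>s. (x, s))) differentiable (at t)"
    using assms by (intro differentiable_chain_at) auto
  hence "(\<lambda>s. f x s) differentiable (at t)" by (simp add: o_def)
  thus ?thesis unfolding pt_def using DERIV_deriv_iff_real_differentiable by blast
qed

lemma open_slice_x: "open S \<Longrightarrow> open {y. (y, t) \<in> S}"
proof -
  assume "open S"
  have "{y. (y, t) \<in> S} = (\<lambda>y. (y, t)) -` S" by auto
  also have "open \<dots>" using \<open>open S\<close>
    by (intro open_vimage continuous_intros)
  finally show ?thesis .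
qed

lemma open_slice_t: "open S \<Longrightarrow> open {s. (x, s) \<in> S}"
proof -
  assume "open S"
  have "{s. (x, s) \<in> S} = (\<lambda>s. (x, s)) -` S" by auto
  also have "open \<dots>" using \<open>open S\<close>
    by (intro open_vimage continuous_intros)
  finally show ?thesis .
qed

lemma stepx:
  fixes F G H :: "real \<Rightarrow> real \<Rightarrow> real"
  assumes "open S" "\<forall>(x, t)\<in>S. F x t = G x t"
    "\<forall>(x, t)\<in>S. ((\<lambda>y. G y t) has_real_derivative H x t) (at x)"
  shows "\<forall>(x, t)\<in>S. px F x t = H x t"
proof (clarify)
  fix x t assume xt: "(x, t) \<in> S"
  have "((\<lambda>y. F y t) has_real_derivative H x t) (at x)"
    apply (rule has_field_derivative_transform_within_open[of "\<lambda>y. G y t" _ _ "{y. (y, t) \<in> S}"])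
    using assms xt open_slice_x by auto
  thus "px F x t = H x t" unfolding px_def by (rule DERIV_imp_deriv)
qed

lemma stept:
  fixes F G H :: "real \<Rightarrow> real \<Rightarrow> real"
  assumes "open S" "\<forall>(x, t)\<in>S. F x t = G x t"
    "\<forall>(x, t)\<in>S. ((\<lambda>s. G x s) has_real_derivative H x t) (at t)"
  shows "\<forall>(x, t)\<in>S. pt F x t = H x t"
proof (clarify)
  fix x t assume xt: "(x, t) \<in> S"
  have "((\<lambda>s. F x s) has_real_derivative H x t) (at t)"
    apply (rule has_field_derivative_transform_within_open[of "\<lambda>s. G x s" _ _ "{s. (x, s) \<in> S}"])
    using assms xt open_slice_t by auto
  thus "pt F x t = H x t" unfolding pt_def by (rule DERIV_imp_deriv)
qed


lemma clairaut:
  fixes f :: "real \<Rightarrow> real \<Rightarrow> real"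
  assumes S: "open S" and xt: "(x0, t0) \<in> S"
    and d0: "(\<lambda>(x, t). f x t) differentiable_on S"
    and d1: "(\<lambda>(x, t). px f x t) differentiable_on S"
    and d2: "(\<lambda>(x, t). pt f x t) differentiable_on S"
    and d3: "(\<lambda>(x, t). pt (px f) x t) differentiable_on S"
  shows "pt (px f) x0 t0 = px (pt f) x0 t0"
proof -
  have da: "\<And>g x t. (\<lambda>(x, t). g x t) differentiable_on S \<Longrightarrow> (x, t) \<in> S \<Longrightarrow>
      (\<lambda>(x, t). g x t) differentiable (at (x, t))"
    using S differentiable_on_eq_differentiable_at by blast
  have fx: "\<And>x t. (x, t) \<in> S \<Longrightarrow> ((\<lambda>y. f y t) has_real_derivative px f x t) (at x)"
    using da[OF d0] partial_x by blast
  have ft: "\<And>x t. (x, t) \<in> S \<Longrightarrow> ((\<lambda>s. f x s) has_real_derivative pt f x t) (at t)"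
    using da[OF d0] partial_t by blast
  have fxt: "\<And>x t. (x, t) \<in> S \<Longrightarrow> ((\<lambda>s. px f x s) has_real_derivative pt (px f) x t) (at t)"
    using da[OF d1] partial_t by blast
  have ftx: "\<And>x t. (x, t) \<in> S \<Longrightarrow> ((\<lambda>y. pt f y t) has_real_derivative px (pt f) x t) (at x)"
    using da[OF d2] partial_x by blast
  have c1: "continuous_on S (\<lambda>(x, t). px f x t)" using d1 differentiable_imp_continuous_on by blast
  have c3: "continuous_on S (\<lambda>(x, t). pt (px f) x t)" using d3 differentiable_imp_continuous_on by blast
  obtain e where e: "e > 0" "cball (x0, t0) e \<subseteq> S"
    using S xt open_contains_cball by blast
  define d where "d = e / 2"
  have d: "d > 0" using e by (simp add: d_def)
  have box: "(y, t) \<in> S" if "\<bar>y - x0\<bar> \<le> d" "\<bar>t - t0\<bar> \<le> d" for y t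
  proof -
    have "dist (x0, t0) (y, t) = sqrt ((x0 - y)^2 + (t0 - t)^2)"
      by (simp add: dist_Pair_Pair dist_real_def)
    also have "\<dots> \<le> sqrt (d^2 + d^2)"
      using that by (intro real_sqrt_le_mono add_mono) (auto simp: power2_le_iff_abs_le abs_minus_commute)
    also have "\<dots> \<le> sqrt (e^2)"
      using d e by (intro real_sqrt_le_mono) (simp add: d_def power_divide)
    also have "\<dots> = e" using e by simp
    finally show ?thesis using e by auto
  qed
  define a0 where "a0 = x0 - d"
  define b0 where "b0 = x0 + d"
  have inbox: "(y, t) \<in> S" if "y \<in> {a0..b0}" "\<bar>t - t0\<bar> \<le> d" for y t
    using that box by (auto simp: a0_def b0_def abs_le_iff)
  have contx: "continuous_on {a0..y} (\<lambda>s. px f s t)" if "y \<in> {a0..b0}" "\<bar>t - t0\<bar> \<le> d" for y t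
    apply (rule continuous_on_compose2[OF c1, of _ "\<lambda>s. (s, t)", simplified])
    using that inbox by (auto intro!: continuous_intros)
  have contxt: "continuous_on {a0..y} (\<lambda>s. pt (px f) s t)" if "y \<in> {a0..b0}" "\<bar>t - t0\<bar> \<le> d" for y t
    apply (rule continuous_on_compose2[OF c3, of _ "\<lambda>s. (s, t)", simplified])
    using that inbox by (auto intro!: continuous_intros)
  have A: "f y t - f a0 t = integral {a0..y} (\<lambda>s. px f s t)"
    if y: "y \<in> {a0..b0}" and t: "\<bar>t - t0\<bar> \<le> d" for y t
  proof -
    have "((\<lambda>s. px f s t) has_integral (f y t - f a0 t)) {a0..y}"
    proof (rule fundamental_theorem_of_calculus)
      show "a0 \<le> y" using y by simp
      fix s assume s: "s \<in> {a0..y}"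
      hence "(s, t) \<in> S" using y t inbox by auto
      thus "((\<lambda>s. f s t) has_vector_derivative px f s t) (at s within {a0..y})"
        using fx has_real_derivative_iff_has_vector_derivative has_field_derivative_at_within by blast
    qed
    thus ?thesis by (simp add: integral_unique)
  qed
  have B: "((\<lambda>t. integral {a0..y} (\<lambda>s. px f s t)) has_real_derivative
      integral {a0..y} (\<lambda>s. pt (px f) s t)) (at t)"
    if y: "y \<in> {a0..b0}" and t: "t \<in> ball t0 d" for y t
  proof -
    have tb: "\<And>t. t \<in> ball t0 d \<Longrightarrow> \<bar>t - t0\<bar> \<le> d" by (auto simp: dist_real_def)
    have "((\<lambda>t. integral (cbox a0 y) (\<lambda>s. px f s t)) has_real_derivative
      integral (cbox a0 y) (\<lambda>s. pt (px f) s t)) (at t within ball t0 d)"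
    proof (rule leibniz_rule_field_derivative[where f = "\<lambda>t s. px f s t" and fx = "\<lambda>t s. pt (px f) s t"])
      fix t' s assume t': "t' \<in> ball t0 d" and s: "s \<in> cbox a0 y"
      have s': "s \<in> {a0..b0}" using s y by auto
      have "(s, t') \<in> S" using inbox[OF s' tb[OF t']] .
      thus "((\<lambda>t. px f s t) has_real_derivative pt (px f) s t') (at t' within ball t0 d)"
        using fxt has_field_derivative_at_within by blast
    next
      fix t' assume t': "t' \<in> ball t0 d"
      show "(\<lambda>s. px f s t') integrable_on cbox a0 y"
        using integrable_continuous_real[OF contx[OF y tb[OF t']]] by (simp only: cbox_interval)
    next
      show "continuous_on (ball t0 d \<times> cbox a0 y) (\<lambda>(t, s). pt (px f) s t)"
      proof -
        have sub: "(\<lambda>p. (snd p, fst p)) ` (ball t0 d \<times> cbox a0 y) \<subseteq> S"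
        proof -
          have "(s, t) \<in> S" if "t \<in> ball t0 d" "s \<in> cbox a0 y" for t s
          proof -
            have s': "s \<in> {a0..b0}" using that y by auto
            show ?thesis using inbox[OF s' tb[OF that(1)]] .
          qed
          thus ?thesis by auto
        qed
        have "continuous_on (ball t0 d \<times> cbox a0 y) (\<lambda>p. (\<lambda>(x, t). pt (px f) x t) ((\<lambda>p. (snd p, fst p)) p))"
          by (rule continuous_on_compose2[OF c3 _ sub]) (intro continuous_intros)
        thus ?thesis by (simp add: case_prod_beta)
      qed
    next
      show "t \<in> ball t0 d" by (rule t)
    next
      show "convex (ball t0 d)" by (rule convex_ball)
    qed
    moreover have "at t within ball t0 d = at t" by (rule at_within_open[OF t open_ball])
    ultimately show ?thesis by (simp only: cbox_interval)
  qed
  have C: "pt f y t0 - pt f a0 t0 = integral {a0..y} (\<lambda>s. pt (px f) s t0)"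
    if y: "y \<in> {a0..b0}" for y
  proof -
    have a0b: "a0 \<in> {a0..b0}" using d by (simp add: a0_def b0_def)
    have "((\<lambda>t. f y t - f a0 t) has_real_derivative pt f y t0 - pt f a0 t0) (at t0)"
    proof -
      have t00: "\<bar>t0 - t0\<bar> \<le> d" using d by simp
      show ?thesis using ft[OF inbox[OF y t00]] ft[OF inbox[OF a0b t00]] by (rule DERIV_diff)
    qed
    moreover have "((\<lambda>t. f y t - f a0 t) has_real_derivative integral {a0..y} (\<lambda>s. pt (px f) s t0)) (at t0)"
      apply (rule has_field_derivative_transform_within_open[OF B[OF y], of t0 "ball t0 d"])
      using d A[OF y] by (auto simp: dist_real_def)
    ultimately show ?thesis using DERIV_unique by blast
  qed
  have x0i: "x0 \<in> {a0..b0}" using d by (simp add: a0_def b0_def)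
  have "((\<lambda>y. pt f a0 t0 + integral {a0..y} (\<lambda>s. pt (px f) s t0)) has_real_derivative
       pt (px f) x0 t0) (at x0 within {a0..b0})"
    using integral_has_real_derivative[OF contxt[of b0 t0], of x0] x0i d
    by (auto intro!: derivative_eq_intros simp: a0_def b0_def)
  hence "((\<lambda>y. pt f a0 t0 + integral {a0..y} (\<lambda>s. pt (px f) s t0)) has_real_derivative
       pt (px f) x0 t0) (at x0)"
    using d by (simp add: at_within_Icc_at a0_def b0_def)
  hence "((\<lambda>y. pt f y t0) has_real_derivative pt (px f) x0 t0) (at x0)"
  proof (rule has_field_derivative_transform_within_open[of _ _ _ "ball x0 d"])
    show "x0 \<in> ball x0 d" using d by simp
  next
    fix y assume "y \<in> ball x0 d"
    hence "y \<in> {a0..b0}" by (auto simp: dist_real_def a0_def b0_def)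
    thus "pt f a0 t0 + integral {a0..y} (\<lambda>s. pt (px f) s t0) = pt f y t0"
      using C[of y] by linarith
  qed simp_all
  thus ?thesis using ftx[OF xt] DERIV_unique by blast
qed


definition cq :: "(real \<Rightarrow> real \<Rightarrow> real) \<Rightarrow> nat \<Rightarrow> real \<Rightarrow> real \<Rightarrow> real" where
  "cq phi k x t = dpart (replicate k True) phi x t / px phi x t"

definition vv :: "(real \<Rightarrow> real \<Rightarrow> real) \<Rightarrow> real \<Rightarrow> real \<Rightarrow> real \<Rightarrow> real \<Rightarrow> real" where
  "vv phi A B x t = A * px phi x t / (A * phi x t + B)"

definition mm0 :: "(real \<Rightarrow> real \<Rightarrow> real) \<Rightarrow> real \<Rightarrow> real \<Rightarrow> real \<Rightarrow> real" where
  "mm0 phi a x t = (3 / 2) * a * cq phi 2 x t * cq phi 2 x t - a * cq phi 3 x t"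

definition mm1 :: "(real \<Rightarrow> real \<Rightarrow> real) \<Rightarrow> real \<Rightarrow> real \<Rightarrow> real \<Rightarrow> real" where
  "mm1 phi a x t = - (3 / 2) * a * cq phi 2 x t * cq phi 2 x t * cq phi 2 x t + 3 * a * cq phi 2 x t * cq phi 3 x t - a * cq phi 4 x t"

definition mm2 :: "(real \<Rightarrow> real \<Rightarrow> real) \<Rightarrow> real \<Rightarrow> real \<Rightarrow> real \<Rightarrow> real" where
  "mm2 phi a x t = 3 * a * cq phi 2 x t * cq phi 2 x t * cq phi 2 x t * cq phi 2 x t - (15 / 2) * a * cq phi 2 x t * cq phi 2 x t * cq phi 3 x t + 3 * a * cq phi 2 x t * cq phi 4 x t + 3 * a * cq phi 3 x t * cq phi 3 x t - a * cq phi 5 x t"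

definition mm3 :: "(real \<Rightarrow> real \<Rightarrow> real) \<Rightarrow> real \<Rightarrow> real \<Rightarrow> real \<Rightarrow> real" where
  "mm3 phi a x t = - 9 * a * cq phi 2 x t * cq phi 2 x t * cq phi 2 x t * cq phi 2 x t * cq phi 2 x t + 27 * a * cq phi 2 x t * cq phi 2 x t * cq phi 2 x t * cq phi 3 x t - (21 / 2) * a * cq phi 2 x t * cq phi 2 x t * cq phi 4 x t - 18 * a * cq phi 2 x t * cq phi 3 x t * cq phi 3 x t + 3 * a * cq phi 2 x t * cq phi 5 x t + 9 * a * cq phi 3 x t * cq phi 4 x t - a * cq phi 6 x t"

definition uu0 :: "(real \<Rightarrow> real \<Rightarrow> real) \<Rightarrow> real \<Rightarrow> real \<Rightarrow> real \<Rightarrow> real" where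
  "uu0 phi a x t = - (3 / 2) * a * cq phi 2 x t * cq phi 2 x t + a * cq phi 3 x t"

definition uu1 :: "(real \<Rightarrow> real \<Rightarrow> real) \<Rightarrow> real \<Rightarrow> real \<Rightarrow> real \<Rightarrow> real" where
  "uu1 phi a x t = 3 * a * cq phi 2 x t * cq phi 2 x t * cq phi 2 x t - 4 * a * cq phi 2 x t * cq phi 3 x t + a * cq phi 4 x t"

definition uu2 :: "(real \<Rightarrow> real \<Rightarrow> real) \<Rightarrow> real \<Rightarrow> real \<Rightarrow> real \<Rightarrow> real" where
  "uu2 phi a x t = - 9 * a * cq phi 2 x t * cq phi 2 x t * cq phi 2 x t * cq phi 2 x t + 17 * a * cq phi 2 x t * cq phi 2 x t * cq phi 3 x t - 5 * a * cq phi 2 x t * cq phi 4 x t - 4 * a * cq phi 3 x t * cq phi 3 x t + a * cq phi 5 x t"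

definition uu3 :: "(real \<Rightarrow> real \<Rightarrow> real) \<Rightarrow> real \<Rightarrow> real \<Rightarrow> real \<Rightarrow> real" where
  "uu3 phi a x t = 36 * a * cq phi 2 x t * cq phi 2 x t * cq phi 2 x t * cq phi 2 x t * cq phi 2 x t - 87 * a * cq phi 2 x t * cq phi 2 x t * cq phi 2 x t * cq phi 3 x t + 27 * a * cq phi 2 x t * cq phi 2 x t * cq phi 4 x t + 42 * a * cq phi 2 x t * cq phi 3 x t * cq phi 3 x t - 6 * a * cq phi 2 x t * cq phi 5 x t - 13 * a * cq phi 3 x t * cq phi 4 x t + a * cq phi 6 x t"

definition uut :: "(real \<Rightarrow> real \<Rightarrow> real) \<Rightarrow> real \<Rightarrow> real \<Rightarrow> real \<Rightarrow> real" where
  "uut phi a x t = - (45 / 2) * a * a * cq phi 2 x t * cq phi 2 x t * cq phi 2 x t * cq phi 2 x t * cq phi 2 x t + 60 * a * a * cq phi 2 x t * cq phi 2 x t * cq phi 2 x t * cq phi 3 x t - (45 / 2) * a * a * cq phi 2 x t * cq phi 2 x t * cq phi 4 x t - 30 * a * a * cq phi 2 x t * cq phi 3 x t * cq phi 3 x t + 6 * a * a * cq phi 2 x t * cq phi 5 x t + 10 * a * a * cq phi 3 x t * cq phi 4 x t - a * a * cq phi 6 x t"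

definition gg0 :: "(real \<Rightarrow> real \<Rightarrow> real) \<Rightarrow> real \<Rightarrow> real \<Rightarrow> real \<Rightarrow> real \<Rightarrow> real \<Rightarrow> real" where
  "gg0 phi A B a x t = (1 / 2) * a * cq phi 2 x t * cq phi 2 x t + 4 * a * cq phi 2 x t * vv phi A B x t - a * cq phi 3 x t - 4 * a * vv phi A B x t * vv phi A B x t"

definition gg1 :: "(real \<Rightarrow> real \<Rightarrow> real) \<Rightarrow> real \<Rightarrow> real \<Rightarrow> real \<Rightarrow> real \<Rightarrow> real \<Rightarrow> real" where
  "gg1 phi A B a x t = - a * cq phi 2 x t * cq phi 2 x t * cq phi 2 x t + 2 * a * cq phi 2 x t * cq phi 3 x t - 12 * a * cq phi 2 x t * vv phi A B x t * vv phi A B x t + 4 * a * cq phi 3 x t * vv phi A B x t - a * cq phi 4 x t + 8 * a * vv phi A B x t * vv phi A B x t * vv phi A B x t"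

definition gg2 :: "(real \<Rightarrow> real \<Rightarrow> real) \<Rightarrow> real \<Rightarrow> real \<Rightarrow> real \<Rightarrow> real \<Rightarrow> real \<Rightarrow> real" where
  "gg2 phi A B a x t = 3 * a * cq phi 2 x t * cq phi 2 x t * cq phi 2 x t * cq phi 2 x t - 7 * a * cq phi 2 x t * cq phi 2 x t * cq phi 3 x t - 12 * a * cq phi 2 x t * cq phi 2 x t * vv phi A B x t * vv phi A B x t + 3 * a * cq phi 2 x t * cq phi 4 x t + 48 * a * cq phi 2 x t * vv phi A B x t * vv phi A B x t * vv phi A B x t + 2 * a * cq phi 3 x t * cq phi 3 x t - 16 * a * cq phi 3 x t * vv phi A B x t * vv phi A B x t + 4 * a * cq phi 4 x t * vv phi A B x t - a * cq phi 5 x t - 24 * a * vv phi A B x t * vv phi A B x t * vv phi A B x t * vv phi A B x t"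

definition gg3 :: "(real \<Rightarrow> real \<Rightarrow> real) \<Rightarrow> real \<Rightarrow> real \<Rightarrow> real \<Rightarrow> real \<Rightarrow> real \<Rightarrow> real" where
  "gg3 phi A B a x t = - 12 * a * cq phi 2 x t * cq phi 2 x t * cq phi 2 x t * cq phi 2 x t * cq phi 2 x t + 33 * a * cq phi 2 x t * cq phi 2 x t * cq phi 2 x t * cq phi 3 x t - 13 * a * cq phi 2 x t * cq phi 2 x t * cq phi 4 x t + 120 * a * cq phi 2 x t * cq phi 2 x t * vv phi A B x t * vv phi A B x t * vv phi A B x t - 18 * a * cq phi 2 x t * cq phi 3 x t * cq phi 3 x t - 40 * a * cq phi 2 x t * cq phi 3 x t * vv phi A B x t * vv phi A B x t + 4 * a * cq phi 2 x t * cq phi 5 x t - 240 * a * cq phi 2 x t * vv phi A B x t * vv phi A B x t * vv phi A B x t * vv phi A B x t + 7 * a * cq phi 3 x t * cq phi 4 x t + 80 * a * cq phi 3 x t * vv phi A B x t * vv phi A B x t * vv phi A B x t - 20 * a * cq phi 4 x t * vv phi A B x t * vv phi A B x t + 4 * a * cq phi 5 x t * vv phi A B x t - a * cq phi 6 x t + 96 * a * vv phi A B x t * vv phi A B x t * vv phi A B x t * vv phi A B x t * vv phi A B x t"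

definition ggt :: "(real \<Rightarrow> real \<Rightarrow> real) \<Rightarrow> real \<Rightarrow> real \<Rightarrow> real \<Rightarrow> real \<Rightarrow> real \<Rightarrow> real" where
  "ggt phi A B a x t = (27 / 2) * a * a * cq phi 2 x t * cq phi 2 x t * cq phi 2 x t * cq phi 2 x t * cq phi 2 x t + 12 * a * a * cq phi 2 x t * cq phi 2 x t * cq phi 2 x t * cq phi 2 x t * vv phi A B x t - 39 * a * a * cq phi 2 x t * cq phi 2 x t * cq phi 2 x t * cq phi 3 x t + 6 * a * a * cq phi 2 x t * cq phi 2 x t * cq phi 2 x t * vv phi A B x t * vv phi A B x t - 30 * a * a * cq phi 2 x t * cq phi 2 x t * cq phi 3 x t * vv phi A B x t + (29 / 2) * a * a * cq phi 2 x t * cq phi 2 x t * cq phi 4 x t + 12 * a * a * cq phi 2 x t * cq phi 2 x t * vv phi A B x t * vv phi A B x t * vv phi A B x t + 24 * a * a * cq phi 2 x t * cq phi 3 x t * cq phi 3 x t - 20 * a * a * cq phi 2 x t * cq phi 3 x t * vv phi A B x t * vv phi A B x t + 12 * a * a * cq phi 2 x t * cq phi 4 x t * vv phi A B x t - 4 * a * a * cq phi 2 x t * cq phi 5 x t + 12 * a * a * cq phi 3 x t * cq phi 3 x t * vv phi A B x t - 10 * a * a * cq phi 3 x t * cq phi 4 x t - 8 * a * a * cq phi 3 x t * vv phi A B x t * vv phi A B x t * vv phi A B x t + 8 * a * a * cq phi 4 x t * vv phi A B x t * vv phi A B x t - 4 * a * a * cq phi 5 x t * vv phi A B x t + a * a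 * cq phi 6 x t"


lemma rep2: "replicate 2 True = [True, True]" by (simp add: numeral_2_eq_2)
lemma rep3: "replicate 3 True = [True, True, True]" by (simp add: numeral_3_eq_3)


lemma algV: "(w::real) \<noteq> 0 \<Longrightarrow> (A * (p * c) * w - A * p * (A * p + 0)) / (w * w) = A * p / w * c - A * p / w * (A * p / w)"
  by (simp add: field_simps)

lemma algTV: "(w::real) \<noteq> 0 \<Longrightarrow> (A * (p * m1) * w - A * p * (A * (p * m0) + 0)) / (w * w) = A * p / w * (m1 - A * p / w * m0)"
  by (simp add: field_simps)

lemma algL: "(w::real) \<noteq> 0 \<Longrightarrow> p \<noteq> 0 \<Longrightarrow> (1 / (w * w) * (w * (A * p + 0) + (A * p + 0) * w)) / 2
     - (1 / (p * p) * (p * (p * c) + (p * c) * p)) / 4 = A * p / w - c / 2"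
  by (simp add: field_simps)

context
  fixes phi :: "real \<Rightarrow> real \<Rightarrow> real" and \<Omega> :: "(real \<times> real) set" and a :: real
  assumes opn: "open \<Omega>"
    and sm: "smooth_on2 \<Omega> phi"
    and nz: "\<forall>(x, t)\<in>\<Omega>. px phi x t \<noteq> 0"
    and eq: "\<forall>(x, t)\<in>\<Omega>. pt phi x t / px phi x t + a * schwarzian phi x t = 0"
begin

lemma dfa: "(x, t) \<in> \<Omega> \<Longrightarrow> (\<lambda>(x, t). dpart ws phi x t) differentiable (at (x, t))"
  using sm opn differentiable_on_eq_differentiable_at unfolding smooth_on2_def by blast

lemma dX: "(x, t) \<in> \<Omega> \<Longrightarrow> ((\<lambda>y. dpart ws phi y t) has_real_derivative dpart (True # ws) phi x t) (at x)"
  using partial_x[OF dfa] by simp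

lemma dT: "(x, t) \<in> \<Omega> \<Longrightarrow> ((\<lambda>s. dpart ws phi x s) has_real_derivative dpart (False # ws) phi x t) (at t)"
  using partial_t[OF dfa] by simp

lemma comm: "(x, t) \<in> \<Omega> \<Longrightarrow> dpart (False # True # ws) phi x t = dpart (True # False # ws) phi x t"
proof -
  assume xt: "(x, t) \<in> \<Omega>"
  have s: "\<And>ws. (\<lambda>(x, t). dpart ws phi x t) differentiable_on \<Omega>" using sm unfolding smooth_on2_def by blast
  show ?thesis
    using clairaut[OF opn xt, of "dpart ws phi"] s[of ws] s[of "True # ws"] s[of "False # ws"] s[of "False # True # ws"]
    by simp
qed

lemma nz1: "(x, t) \<in> \<Omega> \<Longrightarrow> px phi x t \<noteq> 0"
  using nz by auto

lemma DXP1: "(x, t) \<in> \<Omega> \<Longrightarrow> ((\<lambda>y. px phi y t) has_real_derivative px phi x t * cq phi 2 x t) (at x)"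
  using dX[of x t "[True]"] nz1[of x t] by (simp add: cq_def rep2)

lemma DXC: "(x, t) \<in> \<Omega> \<Longrightarrow> ((\<lambda>y. cq phi k y t) has_real_derivative cq phi (Suc k) x t - cq phi 2 x t * cq phi k x t) (at x)"
proof -
  assume xt: "(x, t) \<in> \<Omega>"
  have "((\<lambda>y. dpart (replicate k True) phi y t / px phi y t) has_real_derivative
     (dpart (replicate (Suc k) True) phi x t * px phi x t - dpart (replicate k True) phi x t * dpart [True, True] phi x t)
       / (px phi x t * px phi x t)) (at x)"
    using dX[OF xt, of "replicate k True"] dX[OF xt, of "[True]"] nz1[OF xt]
    by (auto intro!: derivative_eq_intros)
  thus ?thesis using nz1[OF xt] unfolding cq_def rep2
    by (simp add: field_simps)
qed

lemmas DXC2 = DXC[of _ _ 2, simplified]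
lemmas DXC3 = DXC[of _ _ 3, simplified]
lemmas DXC4 = DXC[of _ _ 4, simplified]
lemmas DXC5 = DXC[of _ _ 5, simplified]
lemmas DXC6 = DXC[of _ _ 6, simplified]

lemma D_uu0: "(x, t) \<in> \<Omega> \<Longrightarrow> ((\<lambda>y. uu0 phi a y t) has_real_derivative uu1 phi a x t) (at x)"
  unfolding uu0_def uu1_def
  by (auto intro!: derivative_eq_intros DXC2 DXC3 DXC4 DXC5 DXC6 simp: field_simps)


lemma D_uu1: "(x, t) \<in> \<Omega> \<Longrightarrow> ((\<lambda>y. uu1 phi a y t) has_real_derivative uu2 phi a x t) (at x)"
  unfolding uu1_def uu2_def
  by (auto intro!: derivative_eq_intros DXC2 DXC3 DXC4 DXC5 DXC6 simp: field_simps)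

lemma D_uu2: "(x, t) \<in> \<Omega> \<Longrightarrow> ((\<lambda>y. uu2 phi a y t) has_real_derivative uu3 phi a x t) (at x)"
  unfolding uu2_def uu3_def
  by (auto intro!: derivative_eq_intros DXC2 DXC3 DXC4 DXC5 DXC6 simp: field_simps)

lemma sch: "(x, t) \<in> \<Omega> \<Longrightarrow> a * schwarzian phi x t = uu0 phi a x t"
  using nz1[of x t] unfolding schwarzian_def uu0_def cq_def rep2 rep3
  by (simp add: field_simps power2_eq_square)

lemma MM0: "(x, t) \<in> \<Omega> \<Longrightarrow> dpart [False] phi x t = px phi x t * mm0 phi a x t"
proof -
  assume xt: "(x, t) \<in> \<Omega>"
  have "pt phi x t / px phi x t + uu0 phi a x t = 0" using eq xt sch[OF xt] by auto
  moreover have "mm0 phi a x t = - uu0 phi a x t" unfolding mm0_def uu0_def by (simp add: algebra_simps)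
  ultimately show ?thesis using nz1[OF xt] by (simp add: field_simps)
qed

lemma D_mm0: "(x, t) \<in> \<Omega> \<Longrightarrow> ((\<lambda>y. px phi y t * mm0 phi a y t) has_real_derivative px phi x t * mm1 phi a x t) (at x)"
  unfolding mm0_def mm1_def
  by (auto intro!: derivative_eq_intros DXP1 DXC2 DXC3 DXC4 DXC5 DXC6 simp: field_simps)

lemma D_mm1: "(x, t) \<in> \<Omega> \<Longrightarrow> ((\<lambda>y. px phi y t * mm1 phi a y t) has_real_derivative px phi x t * mm2 phi a x t) (at x)"
  unfolding mm1_def mm2_def
  by (auto intro!: derivative_eq_intros DXP1 DXC2 DXC3 DXC4 DXC5 DXC6 simp: field_simps)

lemma D_mm2: "(x, t) \<in> \<Omega> \<Longrightarrow> ((\<lambda>y. px phi y t * mm2 phi a y t) has_real_derivative px phi x t * mm3 phi a x t) (at x)"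
  unfolding mm2_def mm3_def
  by (auto intro!: derivative_eq_intros DXP1 DXC2 DXC3 DXC4 DXC5 DXC6 simp: field_simps)

lemma MMstep:
  assumes "\<forall>(x, t)\<in>\<Omega>. dpart (False # ws) phi x t = px phi x t * M x t"
    and "\<forall>(x, t)\<in>\<Omega>. ((\<lambda>y. px phi y t * M y t) has_real_derivative px phi x t * M' x t) (at x)"
    and xt: "(x, t) \<in> \<Omega>"
  shows "dpart (False # True # ws) phi x t = px phi x t * M' x t"
proof -
  have "\<forall>(x, t)\<in>\<Omega>. px (dpart (False # ws) phi) x t = px phi x t * M' x t"
    by (rule stepx[OF opn assms(1)]) (use assms(2) in auto)
  hence "px (dpart (False # ws) phi) x t = px phi x t * M' x t" using xt by auto
  thus ?thesis using comm[OF xt, of ws] by simp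
qed

lemma MM1: "(x, t) \<in> \<Omega> \<Longrightarrow> dpart [False, True] phi x t = px phi x t * mm1 phi a x t"
  by (rule MMstep[of "[]" "mm0 phi a"]) (use MM0 D_mm0 in auto)

lemma MM2: "(x, t) \<in> \<Omega> \<Longrightarrow> dpart [False, True, True] phi x t = px phi x t * mm2 phi a x t"
  by (rule MMstep[of "[True]" "mm1 phi a"]) (use MM1 D_mm1 in auto)

lemma MM3: "(x, t) \<in> \<Omega> \<Longrightarrow> dpart [False, True, True, True] phi x t = px phi x t * mm3 phi a x t"
  by (rule MMstep[of "[True, True]" "mm2 phi a"]) (use MM2 D_mm2 in auto)

lemma TP1: "(x, t) \<in> \<Omega> \<Longrightarrow> ((\<lambda>s. px phi x s) has_real_derivative px phi x t * mm1 phi a x t) (at t)"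
  using dT[of x t "[True]"] MM1[of x t] by simp

lemma TC2: "(x, t) \<in> \<Omega> \<Longrightarrow> ((\<lambda>s. cq phi 2 x s) has_real_derivative mm2 phi a x t - cq phi 2 x t * mm1 phi a x t) (at t)"
proof -
  assume xt: "(x, t) \<in> \<Omega>"
  have D1: "((\<lambda>s. cq phi 2 x s) has_real_derivative
     (px phi x t * mm2 phi a x t * px phi x t - dpart [True, True] phi x t * (px phi x t * mm1 phi a x t))
       / (px phi x t * px phi x t)) (at t)"
    unfolding cq_def rep2
    using dT[OF xt, of "[True, True]"] MM2[OF xt] TP1[OF xt] nz1[OF xt]
    by (auto intro!: derivative_eq_intros)
  have E: "(px phi x t * mm2 phi a x t * px phi x t - dpart [True, True] phi x t * (px phi x t * mm1 phi a x t))
       / (px phi x t * px phi x t) = mm2 phi a x t - cq phi 2 x t * mm1 phi a x t"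
    using nz1[OF xt] unfolding cq_def rep2 by (simp add: field_simps)
  show ?thesis using D1 unfolding E .
qed

lemma TC3: "(x, t) \<in> \<Omega> \<Longrightarrow> ((\<lambda>s. cq phi 3 x s) has_real_derivative mm3 phi a x t - cq phi 3 x t * mm1 phi a x t) (at t)"
proof -
  assume xt: "(x, t) \<in> \<Omega>"
  have D1: "((\<lambda>s. cq phi 3 x s) has_real_derivative
     (px phi x t * mm3 phi a x t * px phi x t - dpart [True, True, True] phi x t * (px phi x t * mm1 phi a x t))
       / (px phi x t * px phi x t)) (at t)"
    unfolding cq_def rep3
    using dT[OF xt, of "[True, True, True]"] MM3[OF xt] TP1[OF xt] nz1[OF xt]
    by (auto intro!: derivative_eq_intros)
  have E: "(px phi x t * mm3 phi a x t * px phi x t - dpart [True, True, True] phi x t * (px phi x t * mm1 phi a x t))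
       / (px phi x t * px phi x t) = mm3 phi a x t - cq phi 3 x t * mm1 phi a x t"
    using nz1[OF xt] unfolding cq_def rep3 by (simp add: field_simps)
  show ?thesis using D1 unfolding E .
qed

lemma T_uu0: "(x, t) \<in> \<Omega> \<Longrightarrow> ((\<lambda>s. uu0 phi a x s) has_real_derivative uut phi a x t) (at t)"
  unfolding uu0_def uut_def
  by (auto intro!: derivative_eq_intros TC2 TC3 simp: field_simps mm1_def mm2_def mm3_def)

lemma id1: "uut phi a x t + a * uu3 phi a x t + 3 * uu0 phi a x t * uu1 phi a x t = 0"
  unfolding uut_def uu3_def uu0_def uu1_def mm1_def mm2_def mm3_def by (simp add: field_simps)


lemma DX0: "(x, t) \<in> \<Omega> \<Longrightarrow> ((\<lambda>y. phi y t) has_real_derivative px phi x t) (at x)"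
  using dX[of x t "[]"] by simp

lemma TX0: "(x, t) \<in> \<Omega> \<Longrightarrow> ((\<lambda>s. phi x s) has_real_derivative px phi x t * mm0 phi a x t) (at t)"
  using dT[of x t "[]"] MM0[of x t] by simp

lemma DXV: assumes xt: "(x, t) \<in> \<Omega>" and w: "A * phi x t + B \<noteq> 0"
  shows "((\<lambda>y. vv phi A B y t) has_real_derivative vv phi A B x t * cq phi 2 x t - vv phi A B x t * vv phi A B x t) (at x)"
proof -
  have n: "((\<lambda>y. A * px phi y t) has_real_derivative A * (px phi x t * cq phi 2 x t)) (at x)"
    by (rule DERIV_cmult[OF DXP1[OF xt]])
  have dd: "((\<lambda>y. A * phi y t + B) has_real_derivative A * px phi x t + 0) (at x)"
    by (rule DERIV_add[OF DERIV_cmult[OF DX0[OF xt]] DERIV_const])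
  have E: "(A * (px phi x t * cq phi 2 x t) * (A * phi x t + B) - A * px phi x t * (A * px phi x t + 0)) /
      ((A * phi x t + B) * (A * phi x t + B)) = vv phi A B x t * cq phi 2 x t - vv phi A B x t * vv phi A B x t"
    unfolding vv_def by (rule algV[OF w])
  show ?thesis using DERIV_divide[OF n dd w] unfolding E vv_def .
qed

lemma TV: assumes xt: "(x, t) \<in> \<Omega>" and w: "A * phi x t + B \<noteq> 0"
  shows "((\<lambda>s. vv phi A B x s) has_real_derivative vv phi A B x t * (mm1 phi a x t - vv phi A B x t * mm0 phi a x t)) (at t)"
proof -
  have n: "((\<lambda>s. A * px phi x s) has_real_derivative A * (px phi x t * mm1 phi a x t)) (at t)"
    by (rule DERIV_cmult[OF TP1[OF xt]])
  have dd: "((\<lambda>s. A * phi x s + B) has_real_derivative A * (px phi x t * mm0 phi a x t) + 0) (at t)"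
    by (rule DERIV_add[OF DERIV_cmult[OF TX0[OF xt]] DERIV_const])
  have E: "(A * (px phi x t * mm1 phi a x t) * (A * phi x t + B) - A * px phi x t * (A * (px phi x t * mm0 phi a x t) + 0)) /
      ((A * phi x t + B) * (A * phi x t + B)) = vv phi A B x t * (mm1 phi a x t - vv phi A B x t * mm0 phi a x t)"
    unfolding vv_def by (rule algTV[OF w])
  show ?thesis using DERIV_divide[OF n dd w] unfolding E vv_def .
qed

lemma D_gg0: "(x, t) \<in> \<Omega> \<Longrightarrow> A * phi x t + B \<noteq> 0 \<Longrightarrow> ((\<lambda>y. gg0 phi A B a y t) has_real_derivative gg1 phi A B a x t) (at x)"
  unfolding gg0_def gg1_def
  by (auto intro!: derivative_eq_intros DXC2 DXC3 DXC4 DXC5 DXC6 DXV simp: field_simps)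

lemma D_gg1: "(x, t) \<in> \<Omega> \<Longrightarrow> A * phi x t + B \<noteq> 0 \<Longrightarrow> ((\<lambda>y. gg1 phi A B a y t) has_real_derivative gg2 phi A B a x t) (at x)"
  unfolding gg1_def gg2_def
  by (auto intro!: derivative_eq_intros DXC2 DXC3 DXC4 DXC5 DXC6 DXV simp: field_simps)

lemma D_gg2: "(x, t) \<in> \<Omega> \<Longrightarrow> A * phi x t + B \<noteq> 0 \<Longrightarrow> ((\<lambda>y. gg2 phi A B a y t) has_real_derivative gg3 phi A B a x t) (at x)"
  unfolding gg2_def gg3_def
  by (auto intro!: derivative_eq_intros DXC2 DXC3 DXC4 DXC5 DXC6 DXV simp: field_simps)

lemma T_gg0: "(x, t) \<in> \<Omega> \<Longrightarrow> A * phi x t + B \<noteq> 0 \<Longrightarrow> ((\<lambda>s. gg0 phi A B a x s) has_real_derivative ggt phi A B a x t) (at t)"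
  unfolding gg0_def ggt_def
  by (auto intro!: derivative_eq_intros TC2 TC3 TV simp: field_simps mm0_def mm1_def mm2_def mm3_def)

lemma id2: "ggt phi A B a x t + a * gg3 phi A B a x t + 3 * gg0 phi A B a x t * gg1 phi A B a x t = 0"
  unfolding ggt_def gg3_def gg0_def gg1_def by (simp add: field_simps)

lemma Leq: assumes "w \<noteq> 0" "p \<noteq> 0"
  shows "ln (\<bar>w\<bar> / sqrt \<bar>p\<bar>) = ln (w * w) / 2 - ln (p * p) / 4"
proof -
  have lw: "ln (\<bar>w\<bar> * \<bar>w\<bar>) = ln \<bar>w\<bar> + ln \<bar>w\<bar>" by (rule ln_mult_pos) (use assms in auto)
  have lp: "ln (\<bar>p\<bar> * \<bar>p\<bar>) = ln \<bar>p\<bar> + ln \<bar>p\<bar>" by (rule ln_mult_pos) (use assms in auto)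
  have ls: "ln (\<bar>w\<bar> / sqrt \<bar>p\<bar>) = ln \<bar>w\<bar> - ln (sqrt \<bar>p\<bar>)" by (rule ln_divide_pos) (use assms in auto)
  have lq: "ln (sqrt \<bar>p\<bar>) = ln \<bar>p\<bar> / 2" using assms by (simp add: ln_sqrt)
  have "\<bar>w\<bar> * \<bar>w\<bar> = w * w" "\<bar>p\<bar> * \<bar>p\<bar> = p * p" by simp_all
  thus ?thesis using lw lp ls lq by simp
qed

lemma DL: assumes xt: "(x, t) \<in> \<Omega>" and w: "A * phi x t + B \<noteq> 0"
  shows "((\<lambda>y. ln ((A * phi y t + B) * (A * phi y t + B)) / 2 - ln (px phi y t * px phi y t) / 4)
     has_real_derivative vv phi A B x t - cq phi 2 x t / 2) (at x)"
proof -
  have p: "px phi x t \<noteq> 0" using nz1[OF xt] .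
  have d1: "((\<lambda>y. (A * phi y t + B) * (A * phi y t + B)) has_real_derivative
      (A * phi x t + B) * (A * px phi x t + 0) + (A * px phi x t + 0) * (A * phi x t + B)) (at x)"
    by (intro DERIV_mult' DERIV_add DERIV_cmult DX0[OF xt] DERIV_const)
  have d2: "((\<lambda>y. px phi y t * px phi y t) has_real_derivative
      px phi x t * (px phi x t * cq phi 2 x t) + (px phi x t * cq phi 2 x t) * px phi x t) (at x)"
    by (intro DERIV_mult' DXP1[OF xt])
  have pos1: "0 < (A * phi x t + B) * (A * phi x t + B)" using w not_real_square_gt_zero by blast
  have pos2: "0 < px phi x t * px phi x t" using p not_real_square_gt_zero by blast
  have l: "((\<lambda>y. ln ((A * phi y t + B) * (A * phi y t + B)) / 2 - ln (px phi y t * px phi y t) / 4)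
     has_real_derivative
       (1 / ((A * phi x t + B) * (A * phi x t + B)) * ((A * phi x t + B) * (A * px phi x t + 0) + (A * px phi x t + 0) * (A * phi x t + B))) / 2
     - (1 / (px phi x t * px phi x t) * (px phi x t * (px phi x t * cq phi 2 x t) + (px phi x t * cq phi 2 x t) * px phi x t)) / 4) (at x)"
    by (intro DERIV_diff DERIV_cdivide DERIV_chain2[OF DERIV_ln_divide[OF pos1] d1] DERIV_chain2[OF DERIV_ln_divide[OF pos2] d2])
  have E: "(1 / ((A * phi x t + B) * (A * phi x t + B)) * ((A * phi x t + B) * (A * px phi x t + 0) + (A * px phi x t + 0) * (A * phi x t + B))) / 2
     - (1 / (px phi x t * px phi x t) * (px phi x t * (px phi x t * cq phi 2 x t) + (px phi x t * cq phi 2 x t) * px phi x t)) / 4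
     = vv phi A B x t - cq phi 2 x t / 2"
    unfolding vv_def by (rule algL[OF w p])
  show ?thesis using l unfolding E .
qed

lemma DL2: assumes xt: "(x, t) \<in> \<Omega>" and w: "A * phi x t + B \<noteq> 0"
  shows "((\<lambda>y. vv phi A B y t - cq phi 2 y t / 2) has_real_derivative
     vv phi A B x t * cq phi 2 x t - vv phi A B x t * vv phi A B x t - (cq phi 3 x t - cq phi 2 x t * cq phi 2 x t) / 2) (at x)"
  using DXV[OF xt w] DXC2[OF xt] by (auto intro!: derivative_eq_intros simp: field_simps)

end


theorem mainTheorem8:
  fixes phi :: "real \<Rightarrow> real \<Rightarrow> real" and a :: real and \<Omega> :: "(real \<times> real) set"
  assumes "a \<noteq> 0"
    and "open \<Omega>"
    and "smooth_on2 \<Omega> phi"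
    and "\<forall>(x, t)\<in>\<Omega>. px phi x t \<noteq> 0"
    and "\<forall>(x, t)\<in>\<Omega>. pt phi x t / px phi x t + a * schwarzian phi x t = 0"
  shows "(\<forall>(x, t)\<in>\<Omega>. KdV_at a (\<lambda>x t. a * schwarzian phi x t) x t)
    \<and> (\<forall>A B U. (A \<noteq> 0 \<or> B \<noteq> 0) \<longrightarrow> open U \<longrightarrow> U \<subseteq> \<Omega> \<longrightarrow>
         (\<forall>(x, t)\<in>U. A * phi x t + B \<noteq> 0) \<longrightarrow>
         (\<forall>(x, t)\<in>U. KdV_at a
            (\<lambda>x t. a * schwarzian phi x t
                  + 4 * a * px (px (\<lambda>y s. ln (\<bar>A * phi y s + B\<bar> / sqrt \<bar>px phi y s\<bar>))) x t) x t))"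
  proof -
  note ctx = assms(2) assms(3) assms(4) assms(5)
  have o: "open \<Omega>" by (rule assms(2))
  have U0: "\<forall>(x, t)\<in>\<Omega>. a * schwarzian phi x t = uu0 phi a x t" using sch[OF ctx] by auto
  have U1: "\<forall>(x, t)\<in>\<Omega>. px (\<lambda>x t. a * schwarzian phi x t) x t = uu1 phi a x t"
    by (rule stepx[OF o U0]) (use D_uu0[OF ctx] in auto)
  have U2: "\<forall>(x, t)\<in>\<Omega>. px (px (\<lambda>x t. a * schwarzian phi x t)) x t = uu2 phi a x t"
    by (rule stepx[OF o U1]) (use D_uu1[OF ctx] in auto)
  have U3: "\<forall>(x, t)\<in>\<Omega>. px (px (px (\<lambda>x t. a * schwarzian phi x t))) x t = uu3 phi a x t"
    by (rule stepx[OF o U2]) (use D_uu2[OF ctx] in auto)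
  have UT: "\<forall>(x, t)\<in>\<Omega>. pt (\<lambda>x t. a * schwarzian phi x t) x t = uut phi a x t"
    by (rule stept[OF o U0]) (use T_uu0[OF ctx] in auto)
  have part1: "\<forall>(x, t)\<in>\<Omega>. KdV_at a (\<lambda>x t. a * schwarzian phi x t) x t"
  proof clarify
    fix x t assume xt: "(x, t) \<in> \<Omega>"
    have "uut phi a x t + a * uu3 phi a x t + 3 * uu0 phi a x t * uu1 phi a x t = 0" by (rule id1[OF ctx])
    moreover have "a * schwarzian phi x t = uu0 phi a x t" using U0 xt by auto
    moreover have "px (\<lambda>x t. a * schwarzian phi x t) x t = uu1 phi a x t" using U1 xt by auto
    moreover have "px (px (px (\<lambda>x t. a * schwarzian phi x t))) x t = uu3 phi a x t" using U3 xt by auto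
    moreover have "pt (\<lambda>x t. a * schwarzian phi x t) x t = uut phi a x t" using UT xt by auto
    ultimately show "KdV_at a (\<lambda>x t. a * schwarzian phi x t) x t"
      unfolding KdV_at_def by simp
  qed
  have part2: "KdV_at a
            (\<lambda>x t. a * schwarzian phi x t
                  + 4 * a * px (px (\<lambda>y s. ln (\<bar>A * phi y s + B\<bar> / sqrt \<bar>px phi y s\<bar>))) x t) x t"
    if oU: "open U" and sub: "U \<subseteq> \<Omega>" and wU: "\<forall>(x, t)\<in>U. A * phi x t + B \<noteq> 0" and xt: "(x, t) \<in> U"
    for A B U x t
  proof -
    have inO: "\<And>x t. (x, t) \<in> U \<Longrightarrow> (x, t) \<in> \<Omega>" using sub by auto
    have wn: "\<And>x t. (x, t) \<in> U \<Longrightarrow> A * phi x t + B \<noteq> 0" using wU by auto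
    have L0: "\<forall>(x, t)\<in>U. ln (\<bar>A * phi x t + B\<bar> / sqrt \<bar>px phi x t\<bar>)
        = ln ((A * phi x t + B) * (A * phi x t + B)) / 2 - ln (px phi x t * px phi x t) / 4"
    proof clarify
      fix x t assume xtU: "(x, t) \<in> U"
      have w: "A * phi x t + B \<noteq> 0" using wn[OF xtU] .
      have p: "px phi x t \<noteq> 0" using assms(4) inO[OF xtU] by auto
      show "ln (\<bar>A * phi x t + B\<bar> / sqrt \<bar>px phi x t\<bar>)
        = ln ((A * phi x t + B) * (A * phi x t + B)) / 2 - ln (px phi x t * px phi x t) / 4"
        by (rule Leq[OF ctx w p])
    qed
    have L1: "\<forall>(x, t)\<in>U. px (\<lambda>y s. ln (\<bar>A * phi y s + B\<bar> / sqrt \<bar>px phi y s\<bar>)) x t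
        = vv phi A B x t - cq phi 2 x t / 2"
      by (rule stepx[OF oU L0]) (use DL[OF ctx] inO wn in auto)
    have L2: "\<forall>(x, t)\<in>U. px (px (\<lambda>y s. ln (\<bar>A * phi y s + B\<bar> / sqrt \<bar>px phi y s\<bar>))) x t
        = vv phi A B x t * cq phi 2 x t - vv phi A B x t * vv phi A B x t - (cq phi 3 x t - cq phi 2 x t * cq phi 2 x t) / 2"
      by (rule stepx[OF oU L1]) (use DL2[OF ctx] inO wn in auto)
    have W0: "\<forall>(x, t)\<in>U. a * schwarzian phi x t
                  + 4 * a * px (px (\<lambda>y s. ln (\<bar>A * phi y s + B\<bar> / sqrt \<bar>px phi y s\<bar>))) x t
        = gg0 phi A B a x t"
    proof clarify
      fix x t assume xt: "(x, t) \<in> U"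
      have "uu0 phi a x t + 4 * a * (vv phi A B x t * cq phi 2 x t - vv phi A B x t * vv phi A B x t - (cq phi 3 x t - cq phi 2 x t * cq phi 2 x t) / 2)
         = gg0 phi A B a x t" (is "?l = _") unfolding uu0_def gg0_def by (simp add: field_simps)
      moreover have e1: "a * schwarzian phi x t = uu0 phi a x t" using U0 inO[OF xt] by auto
      moreover have e2: "px (px (\<lambda>y s. ln (\<bar>A * phi y s + B\<bar> / sqrt \<bar>px phi y s\<bar>))) x t
        = vv phi A B x t * cq phi 2 x t - vv phi A B x t * vv phi A B x t - (cq phi 3 x t - cq phi 2 x t * cq phi 2 x t) / 2"
        using L2 xt by auto
      ultimately show "a * schwarzian phi x t
                  + 4 * a * px (px (\<lambda>y s. ln (\<bar>A * phi y s + B\<bar> / sqrt \<bar>px phi y s\<bar>))) x t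
        = gg0 phi A B a x t" by simp
    qed
    have W1: "\<forall>(x, t)\<in>U. px (\<lambda>x t. a * schwarzian phi x t
                  + 4 * a * px (px (\<lambda>y s. ln (\<bar>A * phi y s + B\<bar> / sqrt \<bar>px phi y s\<bar>))) x t) x t
        = gg1 phi A B a x t"
      by (rule stepx[OF oU W0]) (use D_gg0[OF ctx] inO wn in auto)
    have W2: "\<forall>(x, t)\<in>U. px (px (\<lambda>x t. a * schwarzian phi x t
                  + 4 * a * px (px (\<lambda>y s. ln (\<bar>A * phi y s + B\<bar> / sqrt \<bar>px phi y s\<bar>))) x t)) x t
        = gg2 phi A B a x t"
      by (rule stepx[OF oU W1]) (use D_gg1[OF ctx] inO wn in auto)
    have W3: "\<forall>(x, t)\<in>U. px (px (px (\<lambda>x t. a * schwarzian phi x t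
                  + 4 * a * px (px (\<lambda>y s. ln (\<bar>A * phi y s + B\<bar> / sqrt \<bar>px phi y s\<bar>))) x t))) x t
        = gg3 phi A B a x t"
      by (rule stepx[OF oU W2]) (use D_gg2[OF ctx] inO wn in auto)
    have WT: "\<forall>(x, t)\<in>U. pt (\<lambda>x t. a * schwarzian phi x t
                  + 4 * a * px (px (\<lambda>y s. ln (\<bar>A * phi y s + B\<bar> / sqrt \<bar>px phi y s\<bar>))) x t) x t
        = ggt phi A B a x t"
      by (rule stept[OF oU W0]) (use T_gg0[OF ctx] inO wn in auto)
    have "ggt phi A B a x t + a * gg3 phi A B a x t + 3 * gg0 phi A B a x t * gg1 phi A B a x t = 0" by (rule id2[OF ctx])
    moreover have "a * schwarzian phi x t
                  + 4 * a * px (px (\<lambda>y s. ln (\<bar>A * phi y s + B\<bar> / sqrt \<bar>px phi y s\<bar>))) x t = gg0 phi A B a x t"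
      using W0 xt by auto
    moreover have "px (\<lambda>x t. a * schwarzian phi x t
                  + 4 * a * px (px (\<lambda>y s. ln (\<bar>A * phi y s + B\<bar> / sqrt \<bar>px phi y s\<bar>))) x t) x t
        = gg1 phi A B a x t" using W1 xt by auto
    moreover have "px (px (px (\<lambda>x t. a * schwarzian phi x t
                  + 4 * a * px (px (\<lambda>y s. ln (\<bar>A * phi y s + B\<bar> / sqrt \<bar>px phi y s\<bar>))) x t))) x t
        = gg3 phi A B a x t" using W3 xt by auto
    moreover have "pt (\<lambda>x t. a * schwarzian phi x t
                  + 4 * a * px (px (\<lambda>y s. ln (\<bar>A * phi y s + B\<bar> / sqrt \<bar>px phi y s\<bar>))) x t) x t
        = ggt phi A B a x t" using WT xt by auto
    ultimately show ?thesis unfolding KdV_at_def by simp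
  qed
  show ?thesis using part1 part2 by blast
qed

end
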